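(* Let $X \subseteq S^{\mathbb{Z}}$ be a countable one-dimensional subshift of finite type over a finite alphabet $S$, and let $f : X \to X$ be a cellular automaton. Then the language of the asymptotic set $\mathcal{A}(f)$ is a $\Sigma^0_3$ set.
   Context: A subshift of finite type is a set $X \subseteq S^{\mathbb{Z}}$ of all configurations avoiding a finite set of forbidden words; a cellular automaton on $X$ is a continuous shift-commuting map $f: X \to X$. The asymptotic set is $\mathcal{A}(f) = \bigcup_{x \in X} \bigcap_{n \in \mathbb{N}} \overline{\bigcup_{k \geq n} \{f^k(x)\}}$. The language of a set $Y \subseteq S^{\mathbb{Z}}$ is the set of words $w\in S^*$ with $w = y_{[0,k-1]}$ for some $y \in Y$, $k\in\mathbb{N}$, viewed as a subset of $\mathbb{N}$ via a computable bijection. A set $P \subseteq \mathbb{N}$ is $\Sigma^0_3$ if $w \in P \iff (\exists c \in \mathbb{N})(\forall m \in \mathbb{N})(\exists \ell \in \mathbb{N}) R(c,m,\ell,w)$ for a recursive predicate $R$. *)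

theory Defs
  imports Main "HOL-Library.Nat_Bijection" "HOL-Library.Countable_Set"
begin

type_synonym 'a config = "int \<Rightarrow> 'a"

definition shift :: "'a config \<Rightarrow> 'a config" where
  "shift x = (\<lambda>i. x (i + 1))"

definition occurs_at :: "'a list \<Rightarrow> 'a config \<Rightarrow> int \<Rightarrow> bool" where
  "occurs_at w x i \<longleftrightarrow> map (\<lambda>j. x (i + int j)) [0..<length w] = w"

definition is_SFT :: "'a config set \<Rightarrow> bool" where
  "is_SFT X \<longleftrightarrow> (\<exists>F. finite F \<and> X = {x. \<forall>w\<in>F. \<forall>i. \<not> occurs_at w x i})"

text \<open>Product topology of discrete alphabets, written out via central cylinders [-m,m].\<close>
definition agree_on :: "nat \<Rightarrow> 'a config \<Rightarrow> 'a config \<Rightarrow> bool" where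
  "agree_on m x y \<longleftrightarrow> (\<forall>i. \<bar>i\<bar> \<le> int m \<longrightarrow> x i = y i)"

definition cont_on :: "'a config set \<Rightarrow> ('a config \<Rightarrow> 'a config) \<Rightarrow> bool" where
  "cont_on X f \<longleftrightarrow> (\<forall>x\<in>X. \<forall>n. \<exists>m. \<forall>y\<in>X. agree_on m x y \<longrightarrow> agree_on n (f x) (f y))"

definition cellular_automaton :: "'a config set \<Rightarrow> ('a config \<Rightarrow> 'a config) \<Rightarrow> bool" where
  "cellular_automaton X f \<longleftrightarrow> f ` X \<subseteq> X \<and> cont_on X f \<and> (\<forall>x\<in>X. f (shift x) = shift (f x))"

definition cl :: "'a config set \<Rightarrow> 'a config set" where
  "cl A = {y. \<forall>m. \<exists>z\<in>A. agree_on m y z}"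

definition asymptotic_set :: "'a config set \<Rightarrow> ('a config \<Rightarrow> 'a config) \<Rightarrow> 'a config set" where
  "asymptotic_set X f = (\<Union>x\<in>X. \<Inter>n. cl {(f ^^ k) x | k. k \<ge> n})"

definition language :: "'a config set \<Rightarrow> 'a list set" where
  "language Y = {w. \<exists>y\<in>Y. \<exists>k. w = map (\<lambda>j. y (int j)) [0..<k]}"

datatype recf = Zr | Sc | Id nat | Cn recf "recf list" | Pr recf recf | Mn recf

inductive reval :: "recf \<Rightarrow> nat list \<Rightarrow> nat \<Rightarrow> bool" where
  zr: "reval Zr xs 0"
| sc: "reval Sc (x # xs) (Suc x)"
| idp: "i < length xs \<Longrightarrow> reval (Id i) xs (xs ! i)"
| cn: "list_all2 (\<lambda>g y. reval g xs y) gs ys \<Longrightarrow> reval f ys z \<Longrightarrow> reval (Cn f gs) xs z"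
| pr0: "reval f xs y \<Longrightarrow> reval (Pr f g) (0 # xs) y"
| prS: "reval (Pr f g) (n # xs) y \<Longrightarrow> reval g (n # y # xs) z \<Longrightarrow> reval (Pr f g) (Suc n # xs) z"
| mn: "reval f (n # xs) 0 \<Longrightarrow> (\<forall>m<n. \<exists>y. reval f (m # xs) (Suc y)) \<Longrightarrow> reval (Mn f) xs n"

definition recursive_pred4 :: "(nat \<Rightarrow> nat \<Rightarrow> nat \<Rightarrow> nat \<Rightarrow> bool) \<Rightarrow> bool" where
  "recursive_pred4 R \<longleftrightarrow> (\<exists>c. \<forall>a b d w.
      (R a b d w \<longrightarrow> reval c [a, b, d, w] 1) \<and> (\<not> R a b d w \<longrightarrow> reval c [a, b, d, w] 0))"

definition Sigma0_3 :: "nat set \<Rightarrow> bool" where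
  "Sigma0_3 P \<longleftrightarrow> (\<exists>R. recursive_pred4 R \<and>
      (\<forall>w. w \<in> P \<longleftrightarrow> (\<exists>c. \<forall>m. \<exists>l. R c m l w)))"

definition word_code :: "('a \<Rightarrow> nat) \<Rightarrow> 'a list \<Rightarrow> nat" where
  "word_code e w = list_encode (map e w)"

end

theory Submission
  imports Defs
begin



datatype ex = V nat | Cst nat | Add ex ex | Sub ex ex | Mul ex ex | Rec ex ex ex

fun ev :: "ex \<Rightarrow> nat list \<Rightarrow> nat" where
  "ev (V i) env = (if i < length env then env ! i else 0)"
| "ev (Cst n) env = n"
| "ev (Add a b) env = ev a env + ev b env"
| "ev (Sub a b) env = ev a env - ev b env"
| "ev (Mul a b) env = ev a env * ev b env"
| "ev (Rec a s n) env = rec_nat (ev a env) (\<lambda>y acc. ev s (y # acc # env)) (ev n env)"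

lemma reval_Id: "i < length xs \<Longrightarrow> xs ! i = v \<Longrightarrow> reval (recf.Id i) xs v"
  using reval.idp by blast

fun cstp :: "nat \<Rightarrow> recf" where
  "cstp 0 = Zr" | "cstp (Suc n) = Cn Sc [cstp n]"

lemma reval_cstp: "reval (cstp n) xs n"
  by (induction n) (auto intro: reval.intros)

definition "ADDp = Pr (Id 0) (Cn Sc [Id 1])"
definition "MULp = Pr Zr (Cn ADDp [Id 1, Id 2])"
definition "PREDp = Pr Zr (Id 0)"
definition "SUBp = Pr (Id 0) (Cn PREDp [Id 1])"

lemma reval_ADD: "reval ADDp [x, y] (x + y)"
proof (induction x)
  case 0 then show ?case unfolding ADDp_def by (auto intro!: reval.intros reval_Id)
next
  case (Suc x)
  have "reval (Cn Sc [Id 1]) [x, x + y, y] (Suc (x + y))"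
    by (rule reval.cn[where ys="[x+y]"]) (auto intro!: reval.intros reval_Id)
  then show ?case using Suc unfolding ADDp_def by (auto intro: reval.prS)
qed

lemma reval_MUL: "reval MULp [x, y] (x * y)"
proof (induction x)
  case 0 then show ?case unfolding MULp_def by (auto intro!: reval.intros reval_Id)
next
  case (Suc x)
  have "reval (Cn ADDp [Id 1, Id 2]) [x, x * y, y] (x*y + y)"
    by (rule reval.cn[where ys="[x*y, y]"]) (auto intro!: reval.intros reval_ADD reval_Id)
  then show ?case using Suc unfolding MULp_def by (auto intro: reval.prS simp: add.commute)
qed

lemma reval_PRED: "reval PREDp [x] (x - 1)"
proof (induction x)
  case 0 then show ?case unfolding PREDp_def by (auto intro!: reval.intros)
next
  case (Suc n)
  then show ?case unfolding PREDp_def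
    by (auto intro!: reval.prS[where y="n-1"] intro: reval.intros reval_Id)
qed

lemma reval_SUB: "reval SUBp [y, x] (x - y)"
proof (induction y)
  case 0 then show ?case unfolding SUBp_def by (auto intro!: reval.intros reval_Id)
next
  case (Suc y)
  have "reval (Cn PREDp [Id 1]) [y, x - y, x] (x - y - 1)"
    by (rule reval.cn[where ys="[x-y]"]) (auto intro!: reval.intros reval_Id reval_PRED[of "x-y", simplified])
  then show ?case using Suc unfolding SUBp_def by (auto intro: reval.prS)
qed

fun compx :: "nat \<Rightarrow> ex \<Rightarrow> recf" where
  "compx k (V i) = (if i < k then Id i else Zr)"
| "compx k (Cst n) = cstp n"
| "compx k (Add a b) = Cn ADDp [compx k a, compx k b]"
| "compx k (Sub a b) = Cn SUBp [compx k b, compx k a]"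
| "compx k (Mul a b) = Cn MULp [compx k a, compx k b]"
| "compx k (Rec a s n) = Cn (Pr (compx k a) (compx (k+2) s)) (compx k n # map Id [0..<k])"

lemma list_all2_ids: "length env = k \<Longrightarrow> list_all2 (\<lambda>g y. reval g env y) (map Id [0..<k]) env"
  by (auto simp: list_all2_conv_all_nth intro: reval.idp)

lemma reval_comp: "length env = k \<Longrightarrow> reval (compx k e) env (ev e env)"
proof (induction e arbitrary: k env)
  case (V i) then show ?case by (auto intro: reval.intros reval_Id)
next
  case (Cst n) then show ?case by (simp add: reval_cstp)
next
  case (Add a b) then show ?case
    by (auto intro!: reval.cn[where ys="[ev a env, ev b env]"] reval_ADD)
next
  case (Sub a b) then show ?case
    by (auto intro!: reval.cn[where ys="[ev b env, ev a env]"] reval_SUB)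
next
  case (Mul a b) then show ?case
    by (auto intro!: reval.cn[where ys="[ev a env, ev b env]"] reval_MUL)
next
  case (Rec a s n)
  have P: "reval (Pr (compx k a) (compx (k+2) s)) (m # env)
      (rec_nat (ev a env) (\<lambda>y acc. ev s (y # acc # env)) m)" for m
  proof (induction m)
    case 0 then show ?case using Rec by (auto intro: reval.pr0)
  next
    case (Suc m)
    have "reval (compx (k+2) s) (m # rec_nat (ev a env) (\<lambda>y acc. ev s (y # acc # env)) m # env)
        (ev s (m # rec_nat (ev a env) (\<lambda>y acc. ev s (y # acc # env)) m # env))"
      by (rule Rec.IH(2)) (use Rec.prems in simp)
    then show ?case using Suc by (auto intro: reval.prS)
  qed
  show ?case using Rec P[of "ev n env"]
    by (auto intro!: reval.cn[where ys="ev n env # env"] list_all2_ids)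
qed




fun lift :: "nat \<Rightarrow> ex \<Rightarrow> ex" where
  "lift d (V i) = (if i < d then V i else V (Suc i))"
| "lift d (Cst n) = Cst n"
| "lift d (Add a b) = Add (lift d a) (lift d b)"
| "lift d (Sub a b) = Sub (lift d a) (lift d b)"
| "lift d (Mul a b) = Mul (lift d a) (lift d b)"
| "lift d (Rec a s n) = Rec (lift d a) (lift (d+2) s) (lift d n)"

lemma ev_lift: "d \<le> length env \<Longrightarrow> ev (lift d e) (take d env @ z # drop d env) = ev e env"
proof (induction e arbitrary: d env)
  case (V i) then show ?case by (auto simp: nth_append min_def)
next
  case (Rec a s n)
  have "ev (lift (d+2) s) (y # acc # take d env @ z # drop d env) = ev s (y # acc # env)" for y acc
    using Rec.IH(2)[of "d+2" "y # acc # env"] Rec.prems by simp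
  then show ?case using Rec by simp
qed auto

lemma ev_lift0[simp]: "ev (lift 0 e) (z # env) = ev e env"
  using ev_lift[of 0 env e z] by simp

lemma ev_lift1[simp]: "ev (lift (Suc 0) e) (y # z # env) = ev e (y # env)"
  using ev_lift[of 1 "y # env" e z] by simp

definition "sg a = Sub (Cst 1) (Sub (Cst 1) a)"
definition "eNot a = Sub (Cst 1) a"
definition "eAnd a b = Mul (sg a) (sg b)"
definition "eOr a b = sg (Add a b)"
definition "eEq a b = eNot (Add (Sub a b) (Sub b a))"
definition "eLe a b = eNot (Sub a b)"
definition "eLt a b = eLe (Add a (Cst 1)) b"
definition "eIf c a b = Add (Mul (sg c) a) (Mul (eNot c) b)"
definition "eSum b P = Rec (Cst 0) (Add (V 1) (lift 1 P)) b"
definition "eAll b P = eEq (eSum b (eNot P)) (Cst 0)"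
definition "eEx b P = sg (eSum b P)"
definition "eMu b P = eSum b (eAll (Add (V 0) (Cst 1)) (eNot (lift 1 P)))"

lemma ev_sg[simp]: "ev (sg a) env = of_bool (ev a env \<noteq> 0)" by (simp add: sg_def)
lemma ev_eNot[simp]: "ev (eNot a) env = of_bool (ev a env = 0)" by (simp add: eNot_def)
lemma ev_eAnd[simp]: "ev (eAnd a b) env = of_bool (ev a env \<noteq> 0 \<and> ev b env \<noteq> 0)" by (simp add: eAnd_def)
lemma ev_eOr[simp]: "ev (eOr a b) env = of_bool (ev a env \<noteq> 0 \<or> ev b env \<noteq> 0)" by (simp add: eOr_def)
lemma ev_eEq[simp]: "ev (eEq a b) env = of_bool (ev a env = ev b env)" by (simp add: eEq_def)
lemma ev_eLe[simp]: "ev (eLe a b) env = of_bool (ev a env \<le> ev b env)" by (simp add: eLe_def)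
lemma ev_eLt[simp]: "ev (eLt a b) env = of_bool (ev a env < ev b env)" by (simp add: eLt_def)
lemma ev_eIf[simp]: "ev (eIf c a b) env = (if ev c env \<noteq> 0 then ev a env else ev b env)" by (simp add: eIf_def)
lemma ev_eSum[simp]: "ev (eSum b P) env = (\<Sum>y<ev b env. ev P (y # env))"
proof -
  have "rec_nat 0 (\<lambda>y acc. acc + ev P (y # env)) m = (\<Sum>y<m. ev P (y # env))" for m
    by (induction m) auto
  then show ?thesis by (simp add: eSum_def)
qed
lemma ev_eAll[simp]: "ev (eAll b P) env = of_bool (\<forall>y<ev b env. ev P (y # env) \<noteq> 0)"
  by (auto simp add: eAll_def)
lemma ev_eEx[simp]: "ev (eEx b P) env = of_bool (\<exists>y<ev b env. ev P (y # env) \<noteq> 0)"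
  by (simp add: eEx_def)

lemma ev_eMu: assumes "x0 < ev b env" "ev P (x0 # env) \<noteq> 0" "\<And>z. z < x0 \<Longrightarrow> ev P (z # env) = 0"
  shows "ev (eMu b P) env = x0"
proof -
  have "ev (eMu b P) env = (\<Sum>x<ev b env. of_bool (\<forall>z<x+1. ev P (z # env) = 0))"
    by (simp add: eMu_def)
  also have "\<dots> = card {x. x < ev b env \<and> (\<forall>z<x+1. ev P (z # env) = 0)}"
    by (simp add: of_bool_def sum.If_cases Int_def)
  also have "{x. x < ev b env \<and> (\<forall>z<x+1. ev P (z # env) = 0)} = {..<x0}"
  proof (safe)
    fix x assume "x < ev b env" "\<forall>z<x+1. ev P (z # env) = 0"
    then show "x < x0" using assms(2) by (metis less_Suc_eq_le Suc_eq_plus1 not_less)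
  next
    fix x z assume "x < x0" "z < x + 1" then show "ev P (z # env) = 0" using assms(3) by simp
  next
    fix x assume "x < x0" then show "x < ev b env" using assms(1) by simp
  qed
  finally show ?thesis by simp
qed




definition "eTri s = eSum (Add s (Cst 1)) (V 0)"
definition "ePe a b = Add (eTri (Add a b)) a"
definition "eFst n = eMu (Add n (Cst 1)) (eEx (Add (lift 0 n) (Cst 1)) (eEq (ePe (V 1) (V 0)) (lift 0 (lift 0 n))))"
definition "eSnd n = eMu (Add n (Cst 1)) (eEx (Add (lift 0 n) (Cst 1)) (eEq (ePe (V 0) (V 1)) (lift 0 (lift 0 n))))"

lemma ev_eTri[simp]: "ev (eTri s) env = triangle (ev s env)"
proof -
  have "(\<Sum>y<m+1. y) = triangle m" for m by (induction m) auto
  then show ?thesis by (simp add: eTri_def)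
qed

lemma ev_ePe[simp]: "ev (ePe a b) env = prod_encode (ev a env, ev b env)"
  by (simp add: ePe_def prod_encode_def)

lemma ev_eFst[simp]: "ev (eFst n) env = fst (prod_decode (ev n env))"
proof -
  obtain x0 y0 where d: "prod_decode (ev n env) = (x0, y0)" by (cases "prod_decode (ev n env)")
  then have e: "prod_encode (x0, y0) = ev n env" by (metis prod_decode_inverse)
  have "ev (eFst n) env = x0" unfolding eFst_def
  proof (rule ev_eMu)
    show "x0 < ev (Add n (Cst 1)) env" using le_prod_encode_1[of x0 y0] e by simp
    show "ev (eEx (Add (lift 0 n) (Cst 1)) (eEq (ePe (V 1) (V 0)) (lift 0 (lift 0 n)))) (x0 # env) \<noteq> 0"
      using le_prod_encode_2[of y0 x0] e by (auto intro!: exI[of _ y0])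
    fix z assume "z < x0"
    then show "ev (eEx (Add (lift 0 n) (Cst 1)) (eEq (ePe (V 1) (V 0)) (lift 0 (lift 0 n)))) (z # env) = 0"
      using e by auto (metis Pair_inject less_irrefl prod_encode_eq)
  qed
  then show ?thesis using d by simp
qed

lemma ev_eSnd[simp]: "ev (eSnd n) env = snd (prod_decode (ev n env))"
proof -
  obtain x0 y0 where d: "prod_decode (ev n env) = (x0, y0)" by (cases "prod_decode (ev n env)")
  then have e: "prod_encode (x0, y0) = ev n env" by (metis prod_decode_inverse)
  have "ev (eSnd n) env = y0" unfolding eSnd_def
  proof (rule ev_eMu)
    show "y0 < ev (Add n (Cst 1)) env" using le_prod_encode_2[of y0 x0] e by simp
    show "ev (eEx (Add (lift 0 n) (Cst 1)) (eEq (ePe (V 0) (V 1)) (lift 0 (lift 0 n)))) (y0 # env) \<noteq> 0"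
      using le_prod_encode_1[of x0 y0] e by (auto intro!: exI[of _ x0])
    fix z assume "z < y0"
    then show "ev (eEx (Add (lift 0 n) (Cst 1)) (eEq (ePe (V 0) (V 1)) (lift 0 (lift 0 n)))) (z # env) = 0"
      using e by auto (metis Pair_inject less_irrefl prod_encode_eq)
  qed
  then show ?thesis using d by simp
qed

definition tlc :: "nat \<Rightarrow> nat" where "tlc c = snd (prod_decode (c - 1))"
definition nthc :: "nat \<Rightarrow> nat \<Rightarrow> nat" where "nthc c i = fst (prod_decode ((tlc ^^ i) c - 1))"

lemma nthc_list_encode: "i < length L \<Longrightarrow> nthc (list_encode L) i = L ! i"
proof (induction L arbitrary: i)
  case (Cons x xs)
  show ?case
  proof (cases i)
    case 0 then show ?thesis by (simp add: nthc_def)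
  next
    case (Suc j)
    have "tlc (list_encode (x # xs)) = list_encode xs" by (simp add: tlc_def)
    then have "nthc (list_encode (x # xs)) i = nthc (list_encode xs) j"
      by (simp only: nthc_def Suc funpow_Suc_right comp_def)
    then show ?thesis using Cons Suc by simp
  qed
qed simp

definition "eNth c i = eFst (Sub (Rec c (eSnd (Sub (V 1) (Cst 1))) i) (Cst 1))"

lemma ev_eNth[simp]: "ev (eNth c i) env = nthc (ev c env) (ev i env)"
proof -
  have "rec_nat a (\<lambda>y acc. tlc acc) m = (tlc ^^ m) a" for a m
    by (induction m) auto
  then show ?thesis by (simp add: eNth_def nthc_def tlc_def)
qed




definition restr :: "nat \<Rightarrow> 'a config \<Rightarrow> 'a list" where
  "restr M x = map (\<lambda>t. x (int t - int M)) [0..<2*M+1]"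

lemma agree_restr: "agree_on M x y \<longleftrightarrow> restr M x = restr M y"
proof
  assume "agree_on M x y" then show "restr M x = restr M y"
    unfolding restr_def agree_on_def by (auto intro!: map_cong)
next
  assume h: "restr M x = restr M y"
  show "agree_on M x y" unfolding agree_on_def
  proof (intro allI impI)
    fix i :: int assume "\<bar>i\<bar> \<le> int M"
    then have t: "nat (i + int M) < 2*M+1" "int (nat (i + int M)) - int M = i" by auto
    have r: "restr M z ! k = z (int k - int M)" if "k < 2*M+1" for z :: "'a config" and k
      using that unfolding restr_def by (simp del: upt_Suc)
    have "restr M x ! nat (i + int M) = restr M y ! nat (i + int M)" using h by simp
    then show "x i = y i" using r[OF t(1), of x] r[OF t(1), of y] t(2) by simp
  qed
qed

lemma agree_sym: "agree_on M x y \<Longrightarrow> agree_on M y x" by (auto simp: agree_on_def)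
lemma agree_trans: "agree_on M x y \<Longrightarrow> agree_on M y z \<Longrightarrow> agree_on M x z" by (auto simp: agree_on_def)
lemma agree_mono: "agree_on M x y \<Longrightarrow> M' \<le> M \<Longrightarrow> agree_on M' x y" by (auto simp: agree_on_def)

lemma finite_restr_range: "finite (range (restr M :: ('a::finite) config \<Rightarrow> 'a list))"
proof -
  have "range (restr M :: 'a config \<Rightarrow> 'a list) \<subseteq> {xs. set xs \<subseteq> UNIV \<and> length xs = 2*M+1}"
    by (auto simp: restr_def)
  moreover have "finite {xs :: 'a list. set xs \<subseteq> UNIV \<and> length xs = 2*M+1}"
    by (rule finite_lists_length_eq) simp
  ultimately show ?thesis by (rule finite_subset)
qed

lemma cluster_step:
  fixes s :: "nat \<Rightarrow> ('a::finite) config"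
  assumes "infinite J"
  shows "\<exists>j0\<in>J. infinite {j\<in>J. agree_on M (s j0) (s j)}"
proof -
  have "finite ((restr M \<circ> s) ` J)"
    by (rule finite_subset[OF _ finite_restr_range[of M]]) auto
  from pigeonhole_infinite[OF assms this] obtain j0 where
    "j0 \<in> J" "infinite {j \<in> J. (restr M \<circ> s) j = (restr M \<circ> s) j0}" by blast
  then show ?thesis by (auto simp: agree_restr elim!: rev_iffD1[OF _ arg_cong[where f=infinite]] intro!: bexI[of _ j0])
qed

lemma cluster:
  fixes s :: "nat \<Rightarrow> ('a::finite) config"
  shows "\<exists>z. \<forall>M. infinite {j. agree_on M z (s j)}"
proof -
  have step: "\<exists>q. agree_on M q p \<and> infinite {j. agree_on (Suc M) q (s j)}"
    if "infinite {j. agree_on M p (s j)}" for M p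
  proof -
    from cluster_step[OF that, where s=s and M="Suc M"] obtain j0 where
      j0: "agree_on M p (s j0)" "infinite {j \<in> {j. agree_on M p (s j)}. agree_on (Suc M) (s j0) (s j)}"
      by auto
    have "infinite {j. agree_on (Suc M) (s j0) (s j)}"
      using j0(2) by (rule infinite_super[rotated]) auto
    then show ?thesis using j0(1) by (auto intro!: exI[of _ "s j0"] agree_sym)
  qed
  obtain p0 where p0: "infinite {j. agree_on 0 p0 (s j)}"
    using cluster_step[of UNIV, where s=s and M=0, simplified] by auto
  define P where "P = rec_nat p0 (\<lambda>M p. SOME q. agree_on M q p \<and> infinite {j. agree_on (Suc M) q (s j)})"
  have inv: "infinite {j. agree_on M (P M) (s j)}" for M
  proof (induction M)
    case 0 then show ?case using p0 by (simp add: P_def)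
  next
    case (Suc M)
    then show ?case using someI_ex[OF step[OF Suc]] by (simp add: P_def)
  qed
  have ch: "agree_on M (P (Suc M)) (P M)" for M
    using someI_ex[OF step[OF inv[of M]]] by (simp add: P_def)
  have ch2: "agree_on M (P (M + d)) (P M)" for M d
  proof (induction d)
    case (Suc d)
    then show ?case using agree_mono[OF ch[of "M + d"], of M] by (auto intro: agree_trans)
  qed (simp add: agree_on_def)
  define z where "z = (\<lambda>i. P (nat \<bar>i\<bar>) i)"
  have zP: "agree_on M z (P M)" for M
    unfolding agree_on_def z_def
  proof (intro allI impI)
    fix i :: int assume h: "\<bar>i\<bar> \<le> int M"
    have "agree_on (nat \<bar>i\<bar>) (P (nat \<bar>i\<bar> + (M - nat \<bar>i\<bar>))) (P (nat \<bar>i\<bar>))" by (rule ch2)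
    moreover have "nat \<bar>i\<bar> + (M - nat \<bar>i\<bar>) = M" using h by auto
    ultimately show "P (nat \<bar>i\<bar>) i = P M i" by (auto simp: agree_on_def)
  qed
  show ?thesis
  proof (intro exI allI)
    fix M
    show "infinite {j. agree_on M z (s j)}"
      using inv[of M] by (rule infinite_super[rotated]) (auto intro: agree_trans[OF zP])
  qed
qed




definition tr :: "int \<Rightarrow> 'a config \<Rightarrow> 'a config" where "tr i x = (\<lambda>j. x (j + i))"

definition avoid :: "'a list set \<Rightarrow> 'a config set" where
  "avoid F = {x. \<forall>w\<in>F. \<forall>i. \<not> occurs_at w x i}"

lemma occurs_at_iff: "occurs_at w x i \<longleftrightarrow> (\<forall>t<length w. x (i + int t) = w ! t)"
  unfolding occurs_at_def list_eq_iff_nth_eq by simp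

lemma occurs_tr: "occurs_at w (tr i x) j \<longleftrightarrow> occurs_at w x (j + i)"
  unfolding occurs_at_iff tr_def by (simp add: ac_simps)

lemma tr_avoid: "x \<in> avoid F \<Longrightarrow> tr i x \<in> avoid F"
  unfolding avoid_def by (simp add: occurs_tr)

lemma closed_avoid:
  assumes "\<And>M. \<exists>x\<in>avoid F. agree_on M z x" shows "z \<in> avoid F"
proof -
  { fix w i assume w: "w \<in> F" and occ: "occurs_at w z i"
    obtain x where x: "x \<in> avoid F" "agree_on (nat \<bar>i\<bar> + length w) z x" using assms by blast
    have "occurs_at w x i" unfolding occurs_at_iff
    proof (intro allI impI)
      fix t assume t: "t < length w"
      have "\<bar>i + int t\<bar> \<le> int (nat \<bar>i\<bar> + length w)" using t by auto
      then have "z (i + int t) = x (i + int t)" using x(2) by (auto simp: agree_on_def)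
      then show "x (i + int t) = w ! t" using occ t by (auto simp: occurs_at_iff)
    qed
    then have False using x(1) w by (auto simp: avoid_def) }
  then show ?thesis by (auto simp: avoid_def)
qed

lemma glue_avoid:
  assumes "\<forall>w\<in>F. length w \<le> N" "x \<in> avoid F"
    and "\<And>i. \<exists>j. \<forall>t<N. y (i + int t) = x (j + int t)"
  shows "y \<in> avoid F"
proof -
  { fix w i assume w: "w \<in> F" and occ: "occurs_at w y i"
    obtain j where j: "\<forall>t<N. y (i + int t) = x (j + int t)" using assms(3) by blast
    have "occurs_at w x j" using occ j assms(1) w by (auto simp: occurs_at_iff)
    then have False using assms(2) w by (auto simp: avoid_def) }
  then show ?thesis by (auto simp: avoid_def)
qed

lemma sft_avoid: "is_SFT X \<Longrightarrow> \<exists>F N. finite F \<and> X = avoid F \<and> 0 < N \<and> (\<forall>w\<in>F. length w \<le> N)"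
proof -
  assume "is_SFT X"
  then obtain F where F: "finite F" "X = avoid F" by (auto simp: is_SFT_def avoid_def)
  define N where "N = Suc (Max (insert 0 (length ` F)))"
  have "\<forall>w\<in>F. length w \<le> N" using F(1) by (auto simp: N_def intro: le_SucI)
  then show ?thesis using F by (auto simp: N_def intro!: exI[of _ N])
qed

lemma inf_ex: "infinite {j::nat. P j} \<Longrightarrow> \<exists>j\<ge>n. P j"
  using infinite_nat_iff_unbounded_le by auto

lemma shift_tr: "shift x = tr 1 x" by (simp add: shift_def tr_def)

lemma tr_Suc: "tr (int (Suc n)) x = shift (tr (int n) x)"
  by (simp add: shift_def tr_def algebra_simps)

lemma ca_tr_nat:
  assumes "cellular_automaton X f" "X = avoid F" "x \<in> X"
  shows "f (tr (int n) x) = tr (int n) (f x)"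
proof (induction n)
  case 0 then show ?case by (simp add: tr_def)
next
  case (Suc n)
  have "tr (int n) x \<in> X" using assms tr_avoid by blast
  then have "f (shift (tr (int n) x)) = shift (f (tr (int n) x))"
    using assms(1) by (auto simp: cellular_automaton_def)
  then show ?case using Suc by (simp add: tr_Suc shift_def tr_def algebra_simps)
qed

lemma ca_tr0:
  assumes "cellular_automaton X f" "X = avoid F" "x \<in> X"
  shows "f x i = f (tr i x) 0"
proof (cases "i \<ge> 0")
  case True
  then obtain n where n: "i = int n" by (metis nonneg_eq_int)
  show ?thesis using ca_tr_nat[OF assms, of n] n by (simp add: tr_def)
next
  case False
  define n where "n = nat (- i)"
  have n: "i = - int n" using False by (simp add: n_def)
  define y where "y = tr i x"
  have y: "y \<in> X" using assms tr_avoid by (auto simp: y_def)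
  have "x = tr (int n) y" by (simp add: y_def tr_def n)
  then have "f x = tr (int n) (f y)" using ca_tr_nat[OF assms(1,2) y, of n] by simp
  then show ?thesis by (simp add: tr_def n y_def)
qed

lemma ca_uniform:
  fixes X :: "('a::finite) config set"
  assumes "cellular_automaton X f" "X = avoid F"
  shows "\<exists>M. \<forall>x\<in>X. \<forall>y\<in>X. agree_on M x y \<longrightarrow> f x 0 = f y 0"
proof (rule ccontr)
  assume nt: "\<not> ?thesis"
  have "\<exists>p. fst p \<in> X \<and> snd p \<in> X \<and> agree_on M (fst p) (snd p) \<and> f (fst p) 0 \<noteq> f (snd p) 0" for M
  proof -
    from nt obtain x y where "x\<in>X" "y\<in>X" "agree_on M x y" "f x 0 \<noteq> f y 0" by blast
    then show ?thesis by (intro exI[of _ "(x,y)"]) simp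
  qed
  then have "\<forall>M. \<exists>p. fst p \<in> X \<and> snd p \<in> X \<and> agree_on M (fst p) (snd p) \<and> f (fst p) 0 \<noteq> f (snd p) 0" by blast
  from choice[OF this] obtain p where p: "\<And>M. fst (p M) \<in> X \<and> snd (p M) \<in> X \<and> agree_on M (fst (p M)) (snd (p M))
      \<and> f (fst (p M)) 0 \<noteq> f (snd (p M)) 0" by blast
  obtain z where z: "\<And>M. infinite {j. agree_on M z (fst (p j))}"
    using cluster[of "\<lambda>j. fst (p j)"] by blast
  have ex: "\<exists>j\<ge>M. agree_on M z (fst (p j))" for M
    using inf_ex[OF z[of M]] by blast
  have zX: "z \<in> X"
    unfolding assms(2)
  proof (rule closed_avoid)
    fix M obtain j where "agree_on M z (fst (p j))" using ex by blast
    then show "\<exists>x\<in>avoid F. agree_on M z x" using p[of j] assms(2) by blast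
  qed
  obtain M where M: "\<forall>y\<in>X. agree_on M z y \<longrightarrow> agree_on 0 (f z) (f y)"
    using assms(1) zX unfolding cellular_automaton_def cont_on_def by blast
  obtain j where j: "j \<ge> M" "agree_on M z (fst (p j))" using ex by blast
  have "agree_on M z (snd (p j))"
    using j p[of j] by (auto intro: agree_trans agree_mono)
  then have "f z 0 = f (snd (p j)) 0" using M p[of j] by (auto simp: agree_on_def)
  moreover have "f z 0 = f (fst (p j)) 0" using M p[of j] j by (auto simp: agree_on_def)
  ultimately show False using p[of j] by simp
qed

lemma ca_local:
  fixes X :: "('a::finite) config set"
  assumes "cellular_automaton X f" "X = avoid F"
  shows "\<exists>r \<phi>. \<forall>x\<in>X. \<forall>i. f x i = \<phi> (map (\<lambda>t. x (i - int r + int t)) [0..<2*r+1])"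
proof -
  obtain M where M: "\<forall>x\<in>X. \<forall>y\<in>X. agree_on M x y \<longrightarrow> f x 0 = f y 0"
    using ca_uniform[OF assms] by blast
  define \<phi> where "\<phi> u = f (SOME x. x \<in> X \<and> restr M x = u) 0" for u
  have "f x i = \<phi> (map (\<lambda>t. x (i - int M + int t)) [0..<2*M+1])" if x: "x \<in> X" for x i
  proof -
    have tx: "tr i x \<in> X" using x assms tr_avoid by blast
    have eq: "restr M (tr i x) = map (\<lambda>t. x (i - int M + int t)) [0..<2*M+1]"
      by (simp add: restr_def tr_def algebra_simps)
    have ex: "\<exists>y. y \<in> X \<and> restr M y = restr M (tr i x)" using tx by blast
    let ?y = "SOME y. y \<in> X \<and> restr M y = restr M (tr i x)"
    have "?y \<in> X" "agree_on M (tr i x) ?y" using someI_ex[OF ex] by (auto simp: agree_restr)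
    then have "f (tr i x) 0 = f ?y 0" using M tx by blast
    then show ?thesis unfolding eq[symmetric] using ca_tr0[OF assms x, of i] by (simp only: \<phi>_def)
  qed
  then show ?thesis by blast
qed

definition win :: "'a config \<Rightarrow> nat \<Rightarrow> 'a list" where
  "win y n = map (\<lambda>j. y (int j)) [0..<n]"

lemma omega_lang:
  fixes x :: "('a::finite) config" and f :: "'a config \<Rightarrow> 'a config"
  shows "(\<exists>y\<in>(\<Inter>n. cl {(f ^^ k) x | k. k \<ge> n}). win y (length u) = u)
     \<longleftrightarrow> (\<forall>n. \<exists>k\<ge>n. win ((f ^^ k) x) (length u) = u)"
proof
  assume "\<exists>y\<in>(\<Inter>n. cl {(f ^^ k) x | k. k \<ge> n}). win y (length u) = u"
  then obtain y where y: "\<And>n. y \<in> cl {(f ^^ k) x | k. k \<ge> n}" "win y (length u) = u" by blast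
  show "\<forall>n. \<exists>k\<ge>n. win ((f ^^ k) x) (length u) = u"
  proof
    fix n
    obtain k where k: "k \<ge> n" "agree_on (length u) y ((f ^^ k) x)"
      using y(1)[of n] unfolding cl_def by blast
    have "win ((f ^^ k) x) (length u) = win y (length u)"
      using k(2) unfolding win_def agree_on_def by (intro map_cong) auto
    then show "\<exists>k\<ge>n. win ((f ^^ k) x) (length u) = u" using k(1) y(2) by metis
  qed
next
  assume h: "\<forall>n. \<exists>k\<ge>n. win ((f ^^ k) x) (length u) = u"
  from choice[OF h] obtain kk where kk: "\<And>n. kk n \<ge> n \<and> win ((f ^^ kk n) x) (length u) = u" by blast
  obtain z where z: "\<And>M. infinite {j. agree_on M z ((f ^^ kk j) x)}"
    using cluster[of "\<lambda>j. (f ^^ kk j) x"] by blast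
  have ex: "\<exists>j\<ge>n. agree_on M z ((f ^^ kk j) x)" for M n
    using inf_ex[OF z[of M]] by blast
  have "z \<in> cl {(f ^^ k) x | k. k \<ge> n}" for n
    unfolding cl_def
  proof (safe)
    fix m obtain j where j: "j \<ge> n" "agree_on m z ((f ^^ kk j) x)" using ex by blast
    have "(f ^^ kk j) x \<in> {(f ^^ k) x |k. n \<le> k}" using kk[of j] j(1) by auto
    then show "\<exists>za\<in>{(f ^^ k) x |k. n \<le> k}. agree_on m z za" using j(2) by blast
  qed
  moreover have "win z (length u) = u"
  proof -
    obtain j where "agree_on (length u) z ((f ^^ kk j) x)" using ex by blast
    then have "win z (length u) = win ((f ^^ kk j) x) (length u)"
      unfolding win_def agree_on_def by (intro map_cong) auto
    then show ?thesis using kk[of j] by simp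
  qed
  ultimately show "\<exists>y\<in>(\<Inter>n. cl {(f ^^ k) x | k. k \<ge> n}). win y (length u) = u" by blast
qed

lemma lang_asym:
  fixes X :: "('a::finite) config set"
  shows "u \<in> language (asymptotic_set X f) \<longleftrightarrow>
    (\<exists>x\<in>X. \<forall>n. \<exists>k\<ge>n. win ((f ^^ k) x) (length u) = u)"
proof -
  have "u \<in> language (asymptotic_set X f) \<longleftrightarrow>
     (\<exists>x\<in>X. \<exists>y\<in>(\<Inter>n. cl {(f ^^ k) x | k. k \<ge> n}). win y (length u) = u)"
  proof
    assume "u \<in> language (asymptotic_set X f)"
    then obtain y k where y: "y \<in> asymptotic_set X f" "u = map (\<lambda>j. y (int j)) [0..<k]"
      unfolding language_def by blast
    then have "win y (length u) = u" by (simp add: win_def)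
    then show "\<exists>x\<in>X. \<exists>y\<in>(\<Inter>n. cl {(f ^^ k) x | k. k \<ge> n}). win y (length u) = u"
      using y(1) unfolding asymptotic_set_def by blast
  next
    assume "\<exists>x\<in>X. \<exists>y\<in>(\<Inter>n. cl {(f ^^ k) x | k. k \<ge> n}). win y (length u) = u"
    then obtain x y where "x \<in> X" "y\<in>(\<Inter>n. cl {(f ^^ k) x | k. k \<ge> n})" "win y (length u) = u"
      by blast
    then show "u \<in> language (asymptotic_set X f)"
      unfolding language_def asymptotic_set_def win_def by (metis (mono_tags, lifting) UN_I mem_Collect_eq)
  qed
  moreover have "\<And>x. (\<exists>y\<in>(\<Inter>n. cl {(f ^^ k) x | k. k \<ge> n}). win y (length u) = u)
     \<longleftrightarrow> (\<forall>n. \<exists>k\<ge>n. win ((f ^^ k) x) (length u) = u)" by (rule omega_lang)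
  ultimately show ?thesis by simp
qed




definition glue :: "'a config set \<Rightarrow> nat \<Rightarrow> bool" where
  "glue X N \<longleftrightarrow> (\<forall>x\<in>X. \<forall>y. (\<forall>i. \<exists>j. \<forall>t<N. y (i + int t) = x (j + int t)) \<longrightarrow> y \<in> X)"

lemma uncountable_natbool: "\<not> countable (UNIV :: (nat \<Rightarrow> bool) set)"
proof
  assume "countable (UNIV :: (nat \<Rightarrow> bool) set)"
  then obtain g :: "(nat \<Rightarrow> bool) \<Rightarrow> nat" where g: "inj g" unfolding countable_def by blast
  define h where "h n = (\<not> (inv g n) n)" for n
  have "inv g (g h) = h" using g by simp
  then have "h (g h) = (\<not> h (g h))" by (subst (1) h_def) simp
  then show False by simp
qed

lemma divmod_int_aux:
  fixes J r L :: int
  assumes "0 \<le> J" "0 \<le> r" "r < L"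
  shows "(J * L + r) div L = J" "(J * L + r) mod L = r"
proof -
  have L: "L \<noteq> 0" using assms by simp
  have "(r + J * L) div L = r div L + J" using L by simp
  moreover have "r div L = 0" using assms by simp
  ultimately show "(J * L + r) div L = J" by (simp add: add.commute)
  have "(r + J * L) mod L = r mod L" using L by simp
  moreover have "r mod L = r" using assms by simp
  ultimately show "(J * L + r) mod L = r" by (simp add: add.commute)
qed

lemma splice:
  fixes x :: "'a config" and a b c :: int
  assumes G: "glue X N" and xX: "x \<in> X" and cX: "countable X"
    and ab: "int N \<le> b - a" and bc: "int N \<le> c - b" and N: "0 < N"
    and beta: "\<And>m. 0 \<le> m \<Longrightarrow> m < int N \<Longrightarrow> x (b + m) = x (a + m) \<and> x (c + m) = x (a + m)"
    and nc: "0 \<le> tz" "tz < c - b" "x (b + tz) \<noteq> x (a + tz)"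
  shows False
proof -
  define L where "L = c - a"
  have L: "0 < L" "L = (c - b) + (b - a)" using ab bc N by (auto simp: L_def)
  define blk where "blk s j t = (if s j then x (a + t) else if t < c - b then x (b + t) else x (a + t - (c - b)))"
    for s :: "nat \<Rightarrow> bool" and j :: nat and t :: int
  define Y where "Y s i = (if i < a then x i else blk s (nat ((i - a) div L)) ((i - a) mod L))"
    for s :: "nat \<Rightarrow> bool" and i
  have Yat: "Y s (a + (J * L + r)) = blk s (nat J) r" if "0 \<le> J" "0 \<le> r" "r < L" for s J r
  proof -
    have "0 \<le> J * L" using that L by simp
    then have "\<not> a + (J * L + r) < a" using that by linarith
    then show ?thesis unfolding Y_def using divmod_int_aux[OF that] by simp
  qed
  have blk0: "blk s j m = x (a + m)" if "0 \<le> m" "m < int N" for s j m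
    using beta[OF that] that bc by (auto simp: blk_def)
  have glueY: "\<exists>j. \<forall>t<N. Y s (i + int t) = x (j + int t)" for s i
  proof (cases "i < a")
    case True
    show ?thesis
    proof (intro exI allI impI)
      fix t assume t: "t < N"
      show "Y s (i + int t) = x (i + int t)"
      proof (cases "i + int t < a")
        case True then show ?thesis by (simp add: Y_def)
      next
        case False
        define q where "q = i + int t - a"
        have q: "0 \<le> q" "q < int N" "q < L" using False t True ab bc L by (auto simp: q_def)
        have "Y s (a + (0 * L + q)) = blk s (nat 0) q" by (rule Yat) (use q in auto)
        then show ?thesis using blk0[OF q(1,2)] by (simp add: q_def)
      qed
    qed
  next
    case False
    define J where "J = (i - a) div L"
    define tz where "tz = (i - a) mod L"
    have J: "0 \<le> J" using False L unfolding J_def by (intro div_int_pos_iff[THEN iffD2]) auto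
    have tz: "0 \<le> tz" "tz < L" using L by (auto simp: tz_def)
    have iq: "i = a + (J * L + tz)" by (simp add: J_def tz_def)
    define j where "j = (if s (nat J) then a + tz else if tz < c - b then b + tz else a + tz - (c - b))"
    show ?thesis
    proof (intro exI[of _ j] allI impI)
      fix t assume t: "t < N"
      show "Y s (i + int t) = x (j + int t)"
      proof (cases "tz + int t < L")
        case True
        have "Y s (i + int t) = blk s (nat J) (tz + int t)"
          using Yat[of J "tz + int t" s] J tz True by (simp add: iq algebra_simps)
        moreover have "blk s (nat J) (tz + int t) = x (j + int t)"
        proof -
          { assume ns: "\<not> s (nat J)" and tc: "tz < c - b" and tt: "\<not> tz + int t < c - b"
            have m: "0 \<le> tz + int t - (c - b)" "tz + int t - (c - b) < int N" using tt tc t by auto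
            have "x (a + (tz + int t - (c - b))) = x (c + (tz + int t - (c - b)))"
              using beta[OF m] by simp
            then have "x (a + (tz + int t) - (c - b)) = x (b + tz + int t)" by (simp add: algebra_simps) }
          then show ?thesis by (auto simp: blk_def j_def algebra_simps)
        qed
        ultimately show ?thesis by simp
      next
        case False
        define m where "m = tz + int t - L"
        have m: "0 \<le> m" "m < int N" using False tz t by (auto simp: m_def)
        have e: "i + int t = a + ((J + 1) * L + m)" by (simp add: iq m_def algebra_simps)
        have "m < L" using m ab bc L by simp
        then have "Y s (i + int t) = blk s (nat (J + 1)) m"
          unfolding e using J m by (intro Yat) auto
        also have "\<dots> = x (a + m)" by (rule blk0[OF m])
        also have "\<dots> = x (j + int t)"
        proof -
          have xc: "x (a + m) = x (c + m)" using beta[OF m] by simp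
          have xb: "x (a + m) = x (b + m)" using beta[OF m] by simp
          { assume "s (nat J)"
            then have "j + int t = c + m" by (simp add: j_def m_def L_def)
            then have ?thesis using xc by simp }
          moreover
          { assume ns: "\<not> s (nat J)" and tc: "tz < c - b"
            have "tz + int t < L" using tc t ab L by simp
            then have ?thesis using False by simp }
          moreover
          { assume ns: "\<not> s (nat J)" and tc: "\<not> tz < c - b"
            then have "j + int t = b + m" by (simp add: j_def m_def L_def)
            then have ?thesis using xb by simp }
          ultimately show ?thesis by blast
        qed
        finally show ?thesis .
      qed
    qed
  qed
  have YX: "Y s \<in> X" for s using G xX glueY unfolding glue_def by blast
  have diff: "Y s \<noteq> Y s'" if "s J" "\<not> s' J" for s s' J
  proof
    assume eq: "Y s = Y s'"
    have "Y s (a + (int J * L + tz)) = blk s (nat (int J)) tz" by (rule Yat) (use nc L ab N in auto)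
    moreover have "Y s' (a + (int J * L + tz)) = blk s' (nat (int J)) tz" by (rule Yat) (use nc L ab N in auto)
    ultimately show False using eq that nc by (simp add: blk_def)
  qed
  have "inj Y"
  proof (rule injI)
    fix s s' assume eq: "Y s = Y s'"
    show "s = s'"
    proof (rule ccontr)
      assume "s \<noteq> s'"
      then obtain J where "s J \<noteq> s' J" by blast
      then show False using diff[of s J s'] diff[of s' J s] eq by (cases "s J") auto
    qed
  qed
  moreover have "countable (range Y)" using cX YX by (blast intro: countable_subset)
  ultimately have "countable (UNIV :: (nat \<Rightarrow> bool) set)"
    using countable_image_inj_on by blast
  then show False using uncountable_natbool by blast
qed

lemma right_ep:
  fixes X :: "('a::finite) config set"
  assumes G: "glue X N" and xX: "x \<in> X" and cX: "countable X" and N: "0 < N"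
  shows "\<exists>a p. 0 < p \<and> (\<forall>i\<ge>a. x (i + p) = x i)"
proof -
  define B where "B n = map (\<lambda>t. x (int n + int t)) [0..<N]" for n :: nat
  have "finite (range B)"
  proof (rule finite_subset)
    show "range B \<subseteq> {xs. set xs \<subseteq> UNIV \<and> length xs = N}" by (auto simp: B_def)
    show "finite {xs :: 'a list. set xs \<subseteq> UNIV \<and> length xs = N}" by (rule finite_lists_length_eq) simp
  qed
  from pigeonhole_infinite[OF infinite_UNIV_nat this] obtain n0 where
    S: "infinite {n. B n = B n0}" by auto
  define S where "S = {n. B n = B n0}"
  have Sinf: "infinite S" using S by (simp add: S_def)
  have Sx: "x (int n + m) = x (int n0 + m)" if "n \<in> S" "0 \<le> m" "m < int N" for n m
  proof -
    have "B n ! nat m = B n0 ! nat m" using that by (simp add: S_def)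
    moreover have "[0..<N] ! nat m = nat m" using that by simp
    ultimately show ?thesis using that by (simp add: B_def)
  qed
  have n0S: "n0 \<in> S" by (simp add: S_def)
  obtain b where b: "b \<in> S" "b \<ge> n0 + N" using inf_ex[of "\<lambda>n. n \<in> S", of "n0 + N"] Sinf by auto
  define a where "a = int n0"
  define p where "p = int b - int n0"
  have p: "0 < p" using b N by (simp add: p_def)
  have key: "x (a + t + p) = x (a + t)" if c: "c \<in> S" "c \<ge> b + N" and t: "0 \<le> t" "t < int c - int b" for c t
  proof (rule ccontr)
    assume ne: "x (a + t + p) \<noteq> x (a + t)"
    show False
    proof (rule splice[OF G xX cX, where a=a and b="int b" and c="int c" and tz=t])
      show "int N \<le> int b - a" "int N \<le> int c - int b" "0 < N" using b c N by (auto simp: a_def)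
      show "x (int b + m) = x (a + m) \<and> x (int c + m) = x (a + m)" if "0 \<le> m" "m < int N" for m
        using Sx[OF b(1) that] Sx[OF c(1) that] by (simp add: a_def)
      show "0 \<le> t" "t < int c - int b" by (rule t)+
      show "x (int b + t) \<noteq> x (a + t)" using ne by (simp add: a_def p_def algebra_simps)
    qed
  qed
  have "\<forall>i\<ge>a. x (i + p) = x i"
  proof (intro allI impI)
    fix i assume i: "i \<ge> a"
    obtain c where c: "c \<in> S" "c \<ge> b + N + nat (i - a) + 1"
      using inf_ex[of "\<lambda>n. n \<in> S", of "b + N + nat (i - a) + 1"] Sinf by auto
    have "x (a + (i - a) + p) = x (a + (i - a))"
      by (rule key[OF c(1)]) (use c i in auto)
    then show "x (i + p) = x i" by simp
  qed
  then show ?thesis using p by blast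
qed

definition rfl :: "'a config \<Rightarrow> 'a config" where "rfl x = (\<lambda>i. x (- i))"

lemma rfl_rfl[simp]: "rfl (rfl x) = x" by (simp add: rfl_def)

lemma glue_rfl:
  assumes G: "glue X N" shows "glue (rfl ` X) N"
  unfolding glue_def
proof (intro ballI allI impI)
  fix x' y assume x': "x' \<in> rfl ` X" and h: "\<forall>i. \<exists>j. \<forall>t<N. y (i + int t) = x' (j + int t)"
  then obtain x0 where x0: "x0 \<in> X" "x' = rfl x0" by blast
  have "rfl y \<in> X"
  proof -
    have "\<exists>j. \<forall>t<N. rfl y (i + int t) = x0 (j + int t)" for i
    proof -
      obtain j' where j': "\<forall>t<N. y (- i - (int N - 1) + int t) = x' (j' + int t)" using h by blast
      show ?thesis
      proof (intro exI[of _ "- j' - (int N - 1)"] allI impI)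
        fix t assume t: "t < N"
        have "N - 1 - t < N" using t by simp
        then have "y (- i - (int N - 1) + int (N - 1 - t)) = x' (j' + int (N - 1 - t))" using j' by blast
        moreover have "int (N - 1 - t) = int N - 1 - int t" using t by simp
        ultimately show "rfl y (i + int t) = x0 (- j' - (int N - 1) + int t)"
          using x0 by (simp add: rfl_def algebra_simps)
      qed
    qed
    then show ?thesis using G x0(1) unfolding glue_def by blast
  qed
  then show "y \<in> rfl ` X" by (metis image_eqI rfl_rfl)
qed

lemma left_ep:
  fixes X :: "('a::finite) config set"
  assumes G: "glue X N" and xX: "x \<in> X" and cX: "countable X" and N: "0 < N"
  shows "\<exists>a p. 0 < p \<and> (\<forall>i\<le>a. x (i - p) = x i)"
proof -
  have "\<exists>a p. 0 < p \<and> (\<forall>i\<ge>a. rfl x (i + p) = rfl x i)"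
    by (rule right_ep[OF glue_rfl[OF G] _ _ N]) (use xX cX in auto)
  then obtain a p where ap: "0 < p" "\<forall>i\<ge>a. rfl x (i + p) = rfl x i" by blast
  have "\<forall>i\<le>-a. x (i - p) = x i"
  proof (intro allI impI)
    fix i assume "i \<le> - a"
    then have "- i \<ge> a" by simp
    then have "rfl x (- i + p) = rfl x (- i)" using ap by blast
    then show "x (i - p) = x i" by (simp add: rfl_def)
  qed
  then show ?thesis using ap by blast
qed

lemma iter_right:
  assumes "\<forall>i\<ge>a. x (i + p) = x i" "0 < p" shows "i \<ge> a \<Longrightarrow> x (i + int k * p) = x i"
proof (induction k)
  case (Suc k)
  have "0 \<le> int k * p" using assms(2) by simp
  then have "i + int k * p \<ge> a" using Suc by simp
  then have "x (i + int k * p + p) = x (i + int k * p)" using assms by blast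
  then show ?case using Suc by (simp add: algebra_simps)
qed simp

lemma iter_left:
  assumes "\<forall>i\<le>a. x (i - p) = x i" "0 < p" shows "i \<le> a \<Longrightarrow> x (i - int k * p) = x i"
proof (induction k)
  case (Suc k)
  have "0 \<le> int k * p" using assms(2) by simp
  then have "i - int k * p \<le> a" using Suc by simp
  then have "x (i - int k * p - p) = x (i - int k * p)" using assms by blast
  then show ?case using Suc by (simp add: algebra_simps)
qed simp

lemma ep_form:
  fixes X :: "('a::finite) config set"
  assumes G: "glue X N" and xX: "x \<in> X" and cX: "countable X" and N: "0 < N"
  shows "\<exists>M P. 0 < P \<and> P \<le> M \<and> (\<forall>pos\<ge>M. x pos = x (M - P + (pos - M) mod P))
     \<and> (\<forall>pos < - M. x pos = x (- M + (pos + M) mod P))"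
proof -
  obtain a1 p1 where r: "0 < p1" "\<forall>i\<ge>a1. x (i + p1) = x i" using right_ep[OF assms] by blast
  obtain a2 p2 where l: "0 < p2" "\<forall>i\<le>a2. x (i - p2) = x i" using left_ep[OF assms] by blast
  define P where "P = p1 * p2"
  have P: "0 < P" using r l by (simp add: P_def)
  have rP: "\<forall>i\<ge>a1. x (i + P) = x i"
    using iter_right[OF r(2,1), of _ "nat p2"] l(1) by (simp add: P_def mult.commute)
  have lP: "\<forall>i\<le>a2. x (i - P) = x i"
    using iter_left[OF l(2,1), of _ "nat p1"] r(1) by (simp add: P_def)
  define M where "M = \<bar>a1\<bar> + \<bar>a2\<bar> + P"
  have "\<forall>pos\<ge>M. x pos = x (M - P + (pos - M) mod P)"
  proof (intro allI impI)
    fix pos assume pos: "pos \<ge> M"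
    define d where "d = (pos - M) div P"
    have d: "0 \<le> d" using pos P unfolding d_def by (intro div_int_pos_iff[THEN iffD2]) auto
    have "0 \<le> (pos - M) mod P" using P by simp
    then have base: "M - P + (pos - M) mod P \<ge> a1" unfolding M_def by linarith
    have "pos = (M - P + (pos - M) mod P) + int (nat (d + 1)) * P" using d
      by (simp add: d_def algebra_simps)
    then show "x pos = x (M - P + (pos - M) mod P)"
      using iter_right[OF rP P base, of "nat (d + 1)"] by simp
  qed
  moreover have "\<forall>pos < - M. x pos = x (- M + (pos + M) mod P)"
  proof (intro allI impI)
    fix pos assume pos: "pos < - M"
    define d where "d = (pos + M) div P"
    have d: "d < 0" using pos P unfolding d_def by (simp add: div_neg_neg_trivial pos_imp_zdiv_neg_iff)
    have base: "- M + (pos + M) mod P \<le> a2"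
      using P pos_mod_bound[OF P, of "pos + M"] unfolding M_def by linarith
    have "pos = (- M + (pos + M) mod P) - int (nat (- d)) * P" using d
      by (simp add: d_def algebra_simps)
    then show "x pos = x (- M + (pos + M) mod P)"
      using iter_left[OF lP P base, of "nat (- d)"] by simp
  qed
  moreover have "P \<le> M" by (simp add: M_def)
  ultimately show ?thesis using P by blast
qed




definition "eMod a b = Rec (Cst 0) (eIf (eEq (Add (V 1) (Cst 1)) (lift 0 (lift 0 b))) (Cst 0) (Add (V 1) (Cst 1))) a"

lemma ev_eMod[simp]: "ev (eMod a b) env = ev a env mod ev b env"
proof -
  have "rec_nat 0 (\<lambda>y acc. if acc + 1 = B then 0 else acc + 1) m = m mod B" for m B :: nat
    by (induction m) (auto simp: mod_Suc)
  then show ?thesis by (simp add: eMod_def cong: if_cong)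
qed

fun eConj :: "ex list \<Rightarrow> ex" where
  "eConj [] = Cst 1" | "eConj (a # as) = eAnd a (eConj as)"
fun eDisj :: "ex list \<Rightarrow> ex" where
  "eDisj [] = Cst 0" | "eDisj (a # as) = eOr a (eDisj as)"

lemma ev_eConj[simp]: "ev (eConj as) env = of_bool (\<forall>a\<in>set as. ev a env \<noteq> 0)"
  by (induction as) auto
lemma ev_eDisj[simp]: "ev (eDisj as) env = of_bool (\<exists>a\<in>set as. ev a env \<noteq> 0)"
  by (induction as) auto

locale enc =
  fixes e :: "'a \<Rightarrow> nat" and r :: nat and \<phi> :: "'a list \<Rightarrow> 'a"
    and Fl :: "'a list list" and al :: "'a list" and tsl :: "'a list list"
begin

definition "rawfix v = (if v \<in> e ` set al then v else e (hd al))"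

definition xraw :: "nat \<Rightarrow> nat \<Rightarrow> nat \<Rightarrow> nat" where
  "xraw c q K = (let M = nthc c 0; P = nthc c 1 in nthc c (2 +
     (if K + M \<le> q then 2 * M - P + (q - K - M) mod P
      else if q + M < K then (P - 1) - (K - q - M - 1) mod P
      else q + M - K)))"

definition "xcode c q K = rawfix (xraw c q K)"

definition "validc c m = (\<forall>u\<in>set Fl. \<not> (\<forall>t<length u. xcode c (m + t) 0 = e (u ! t))
    \<and> \<not> (\<forall>t<length u. xcode c t m = e (u ! t)))"

fun phichain :: "'a list list \<Rightarrow> nat list \<Rightarrow> nat" where
  "phichain [] vs = 0"
| "phichain (ts # tss) vs = (if (\<forall>i<length ts. vs ! i = e (ts ! i)) then e (\<phi> ts) else phichain tss vs)"

definition "kk l = nthc l 0"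
definition "nn l = nthc l 1"
definition "KK l = kk l * r"
definition "WW l = nn l + 2 * KK l"
definition "cell l t q = nthc (nthc l 2) (t * WW l + q)"

definition "diag_ok c l = ((\<forall>q<WW l. cell l 0 q = xcode c q (KK l)) \<and>
   (\<forall>t<kk l. \<forall>q<WW l. r \<le> q \<and> q + r < WW l \<longrightarrow>
      cell l (t + 1) q = phichain tsl (map (\<lambda>i. cell l t (q - r + i)) [0..<2*r+1])))"

definition "encrow l = rec_nat 0 (\<lambda>t acc. Suc (prod_encode (cell l (kk l) (KK l + nn l - 1 - t), acc))) (nn l)"

definition "Rsem c m l w = (validc c m \<and> m \<le> kk l \<and> diag_ok c l \<and> w = encrow l)"

definition "exRawfix v = eIf (eDisj (map (\<lambda>a. eEq v (Cst (e a))) al)) v (Cst (e (hd al)))"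

definition "exXraw c q K = eNth c (Add (Cst 2)
   (eIf (eLe (Add K (eNth c (Cst 0))) q)
     (Add (Sub (Mul (Cst 2) (eNth c (Cst 0))) (eNth c (Cst 1))) (eMod (Sub (Sub q K) (eNth c (Cst 0))) (eNth c (Cst 1))))
     (eIf (eLt (Add q (eNth c (Cst 0))) K)
        (Sub (Sub (eNth c (Cst 1)) (Cst 1)) (eMod (Sub (Sub (Sub K q) (eNth c (Cst 0))) (Cst 1)) (eNth c (Cst 1))))
        (Sub (Add q (eNth c (Cst 0))) K))))"

definition "exXcode c q K = exRawfix (exXraw c q K)"

definition "exValid c m = eConj (map (\<lambda>u. eAnd
   (eNot (eConj (map (\<lambda>t. eEq (exXcode c (Add m (Cst t)) (Cst 0)) (Cst (e (u ! t)))) [0..<length u])))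
   (eNot (eConj (map (\<lambda>t. eEq (exXcode c (Cst t) m) (Cst (e (u ! t)))) [0..<length u])))) Fl)"

fun exChain :: "'a list list \<Rightarrow> ex list \<Rightarrow> ex" where
  "exChain [] as = Cst 0"
| "exChain (ts # tss) as = eIf (eConj (map (\<lambda>i. eEq (as ! i) (Cst (e (ts ! i)))) [0..<length ts]))
      (Cst (e (\<phi> ts))) (exChain tss as)"

definition "exkk l = eNth l (Cst 0)"
definition "exnn l = eNth l (Cst 1)"
definition "exKK l = Mul (exkk l) (Cst r)"
definition "exWW l = Add (exnn l) (Mul (Cst 2) (exKK l))"
definition "exCell l t q = eNth (eNth l (Cst 2)) (Add (Mul t (exWW l)) q)"

definition "exDiag c l = eAnd
  (eAll (exWW l) (eEq (exCell (lift 0 l) (Cst 0) (V 0)) (exXcode (lift 0 c) (V 0) (exKK (lift 0 l)))))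
  (eAll (exkk l) (eAll (exWW (lift 0 l))
     (eOr (eNot (eAnd (eLe (Cst r) (V 0)) (eLt (Add (V 0) (Cst r)) (exWW (lift 0 (lift 0 l))))))
          (eEq (exCell (lift 0 (lift 0 l)) (Add (V 1) (Cst 1)) (V 0))
               (exChain tsl (map (\<lambda>i. exCell (lift 0 (lift 0 l)) (V 1) (Add (Sub (V 0) (Cst r)) (Cst i))) [0..<2*r+1]))))))"

definition "exEnc l = Rec (Cst 0)
  (Add (Cst 1) (ePe (exCell (lift 0 (lift 0 l)) (exkk (lift 0 (lift 0 l)))
      (Sub (Sub (Add (exKK (lift 0 (lift 0 l))) (exnn (lift 0 (lift 0 l)))) (Cst 1)) (V 0))) (V 1))) (exnn l)"

definition "Rexp = sg (eAnd (eAnd (exValid (V 0) (V 1)) (eLe (V 1) (exkk (V 2))))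
                             (eAnd (exDiag (V 0) (V 2)) (eEq (V 3) (exEnc (V 2)))))"

lemma ev_exRawfix[simp]: "ev (exRawfix v) env = rawfix (ev v env)"
  by (auto simp: exRawfix_def rawfix_def)

lemma ev_exXcode[simp]: "ev (exXcode c q K) env = xcode (ev c env) (ev q env) (ev K env)"
  by (simp add: exXcode_def exXraw_def xcode_def xraw_def Let_def)

lemma ev_exValid[simp]: "ev (exValid c m) env = of_bool (validc (ev c env) (ev m env))"
  unfolding exValid_def validc_def by (simp add: atLeast0LessThan lessThan_def)

lemma ev_exChain: "(\<forall>ts\<in>set tss. length ts \<le> length as) \<Longrightarrow>
   ev (exChain tss as) env = phichain tss (map (\<lambda>a. ev a env) as)"
  by (induction tss) auto

lemma ev_ex_simps[simp]:
  "ev (exkk l) env = kk (ev l env)" "ev (exnn l) env = nn (ev l env)"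
  "ev (exKK l) env = KK (ev l env)" "ev (exWW l) env = WW (ev l env)"
  "ev (exCell l t q) env = cell (ev l env) (ev t env) (ev q env)"
  by (simp_all add: exkk_def kk_def exnn_def nn_def exKK_def KK_def exWW_def WW_def exCell_def cell_def)

lemma ev_exDiag: "\<forall>ts\<in>set tsl. length ts \<le> 2*r+1 \<Longrightarrow> ev (exDiag c l) env = of_bool (diag_ok (ev c env) (ev l env))"
  by (simp add: exDiag_def diag_ok_def ev_exChain o_def del: upt_Suc) (metis add_lessD1)

lemma ev_exEnc[simp]: "ev (exEnc l) env = encrow (ev l env)"
  by (simp add: exEnc_def encrow_def)

lemma ev_Rexp: "\<forall>ts\<in>set tsl. length ts \<le> 2*r+1 \<Longrightarrow>
  ev Rexp [c, m, l, w] = of_bool (Rsem c m l w)"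
  by (simp add: Rexp_def ev_exDiag Rsem_def)

end




locale enc_ok = enc e r \<phi> Fl al tsl
  for e :: "('a::finite) \<Rightarrow> nat" and r \<phi> Fl al tsl +
  fixes X :: "'a config set" and f :: "'a config \<Rightarrow> 'a config"
  assumes inj: "inj e" and al: "set al = UNIV" and tsl: "set tsl = {ts. length ts = 2*r+1}"
    and XF: "X = avoid (set Fl)"
    and loc: "\<And>x i. x \<in> X \<Longrightarrow> f x i = \<phi> (map (\<lambda>t. x (i - int r + int t)) [0..<2*r+1])"
    and fX: "\<And>x. x \<in> X \<Longrightarrow> f x \<in> X"
begin

definition "xconf c pos = inv e (if 0 \<le> pos then xcode c (nat pos) 0 else xcode c 0 (nat (- pos)))"

lemma rawfix_range: "rawfix v \<in> range e"
proof -
  have "al \<noteq> []" using al by auto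
  then show ?thesis using al by (auto simp: rawfix_def)
qed

lemma rawfix_e[simp]: "rawfix (e a) = e a"
  using al by (simp add: rawfix_def)

lemma xraw_shift: "xraw c q K = (if K \<le> q then xraw c (q - K) 0 else xraw c 0 (K - q))"
  unfolding xraw_def Let_def by (cases "K \<le> q") (auto simp: algebra_simps)

lemma e_xconf: "e (xconf c (int q - int K)) = xcode c q K"
proof -
  have "xcode c q K = (if 0 \<le> int q - int K then xcode c (nat (int q - int K)) 0 else xcode c 0 (nat (- (int q - int K))))"
    unfolding xcode_def by (subst xraw_shift) (auto simp: nat_diff_distrib)
  then show ?thesis unfolding xconf_def using rawfix_range[of "xraw c _ _"]
    by (simp add: xcode_def f_inv_into_f[of _ e UNIV])
qed

lemma e_xconf_int: "e (xconf c (int q)) = xcode c q 0"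
  using e_xconf[of c q 0] by simp

lemma e_xconf_neg: "e (xconf c (- int K + int t)) = xcode c t K"
  using e_xconf[of c t K] by (simp add: algebra_simps)

lemma e_eq: "e a = e b \<longleftrightarrow> a = b" using inj by (auto dest: injD)

lemma validc_iff: "validc c m \<longleftrightarrow> (\<forall>u\<in>set Fl. \<not> occurs_at u (xconf c) (int m) \<and> \<not> occurs_at u (xconf c) (- int m))"
proof -
  have "xcode c (m + t) 0 = e (u ! t) \<longleftrightarrow> xconf c (int m + int t) = u ! t" for u t
    using e_xconf_int[of c "m + t"] by (metis e_eq of_nat_add)
  moreover have "xcode c t m = e (u ! t) \<longleftrightarrow> xconf c (- int m + int t) = u ! t" for u t
    using e_xconf_neg[of c m t] by (metis e_eq)
  ultimately show ?thesis unfolding validc_def occurs_at_iff by simp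
qed

lemma valid_all: "(\<forall>m. validc c m) \<longleftrightarrow> xconf c \<in> X"
proof
  assume h: "\<forall>m. validc c m"
  show "xconf c \<in> X" unfolding XF avoid_def
  proof (safe)
    fix u i assume u: "u \<in> set Fl" and occ: "occurs_at u (xconf c) i"
    show False
    proof (cases "0 \<le> i")
      case True
      then have "i = int (nat i)" by simp
      then show False using h[rule_format, of "nat i"] u occ by (metis validc_iff)
    next
      case False
      then have "i = - int (nat (- i))" by simp
      then show False using h[rule_format, of "nat (- i)"] u occ by (metis validc_iff)
    qed
  qed
next
  assume "xconf c \<in> X"
  then show "\<forall>m. validc c m" unfolding validc_iff XF avoid_def by blast
qed

lemma phichain_ok: "ts \<in> set tss \<Longrightarrow> \<forall>ts'\<in>set tss. length ts' = length ts \<Longrightarrow> phichain tss (map e ts) = e (\<phi> ts)"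
proof (induction tss)
  case (Cons ts' tss)
  show ?case
  proof (cases "\<forall>i<length ts'. map e ts ! i = e (ts' ! i)")
    case True
    have len: "length ts' = length ts" using Cons.prems(2) by simp
    have "\<forall>i<length ts. ts' ! i = ts ! i" using True len by (simp add: e_eq)
    then have "ts' = ts" using len by (simp add: list_eq_iff_nth_eq)
    then show ?thesis using True by simp
  next
    case False
    have "ts' \<noteq> ts"
    proof
      assume "ts' = ts" then show False using False by simp
    qed
    then have "ts \<in> set tss" using Cons.prems(1) by simp
    moreover have "\<forall>ts'\<in>set tss. length ts' = length ts" using Cons.prems(2) by (simp only: set_simps ball_simps) (rule conjunct2)
    ultimately have IH': "phichain tss (map e ts) = e (\<phi> ts)" using Cons.IH by blast
    show ?thesis by (simp only: phichain.simps if_not_P[OF False] IH')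
  qed
qed simp

lemma phi_ok: "length ts = 2*r+1 \<Longrightarrow> phichain tsl (map e ts) = e (\<phi> ts)"
  by (rule phichain_ok) (use tsl in auto)

lemma funpow_X: "x \<in> X \<Longrightarrow> (f ^^ t) x \<in> X"
  by (induction t) (auto intro: fX)

lemma diag_sound:
  assumes xX: "xconf c \<in> X" and D: "diag_ok c l"
  shows "t \<le> kk l \<Longrightarrow> r * t \<le> q \<Longrightarrow> q + r * t < WW l \<Longrightarrow>
     cell l t q = e ((f ^^ t) (xconf c) (int q - int (KK l)))"
proof (induction t arbitrary: q)
  case 0
  then show ?case using D e_xconf by (simp add: diag_ok_def)
next
  case (Suc t)
  let ?z = "(f ^^ t) (xconf c)"
  have zX: "?z \<in> X" using funpow_X[OF xX] .
  have q: "r \<le> q" "q + r < WW l" using Suc.prems by auto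
  have cells: "map (\<lambda>i. cell l t (q - r + i)) [0..<2*r+1]
      = map e (map (\<lambda>i. ?z (int q - int (KK l) - int r + int i)) [0..<2*r+1])"
  proof (rule nth_equalityI)
    fix i assume "i < length (map (\<lambda>i. cell l t (q - r + i)) [0..<2*r+1])"
    then have i: "i < 2*r+1" by simp
    have "cell l t (q - r + i) = e (?z (int (q - r + i) - int (KK l)))"
      by (rule Suc.IH) (use Suc.prems i in \<open>auto simp: algebra_simps\<close>)
    moreover have "int (q - r + i) - int (KK l) = int q - int (KK l) - int r + int i" using q by simp
    ultimately show "map (\<lambda>i. cell l t (q - r + i)) [0..<2*r+1] ! i =
      map e (map (\<lambda>i. ?z (int q - int (KK l) - int r + int i)) [0..<2*r+1]) ! i"
      using i by (simp del: upt_Suc add: algebra_simps)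
  qed simp
  have "cell l (Suc t) q = phichain tsl (map (\<lambda>i. cell l t (q - r + i)) [0..<2*r+1])"
    using D Suc.prems q unfolding diag_ok_def by auto
  also have "\<dots> = e (\<phi> (map (\<lambda>i. ?z (int q - int (KK l) - int r + int i)) [0..<2*r+1]))"
    unfolding cells by (rule phi_ok) simp
  also have "\<dots> = e (f ?z (int q - int (KK l)))" using loc[OF zX] by simp
  finally show ?case by simp
qed

lemma encrow_aux:
  "t' \<le> n \<Longrightarrow> rec_nat 0 (\<lambda>t acc. Suc (prod_encode (g (n - 1 - t), acc))) t' = list_encode (map g [n - t'..<n])"
proof (induction t')
  case (Suc t')
  have "[n - Suc t'..<n] = (n - Suc t') # [Suc (n - Suc t')..<n]" using Suc.prems
    by (intro upt_conv_Cons) simp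
  moreover have "Suc (n - Suc t') = n - t'" using Suc.prems by simp
  moreover have "n - 1 - t' = n - Suc t'" by simp
  ultimately show ?case using Suc by simp
qed simp

lemma encrow_eq: "encrow l = list_encode (map (\<lambda>q. cell l (kk l) (KK l + q)) [0..<nn l])"
proof -
  have "encrow l = rec_nat 0 (\<lambda>t acc. Suc (prod_encode ((\<lambda>q. cell l (kk l) (KK l + q)) (nn l - 1 - t), acc))) (nn l)"
  proof -
    have "rec_nat 0 (\<lambda>t acc. Suc (prod_encode (cell l (kk l) (KK l + nn l - 1 - t), acc))) m =
          rec_nat 0 (\<lambda>t acc. Suc (prod_encode ((\<lambda>q. cell l (kk l) (KK l + q)) (nn l - 1 - t), acc))) m"
      if "m \<le> nn l" for m
      using that
    proof (induction m)
      case (Suc m)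
      then have "KK l + nn l - 1 - m = KK l + (nn l - 1 - m)" by simp
      then show ?case using Suc by simp
    qed simp
    then show ?thesis unfolding encrow_def by simp
  qed
  also have "\<dots> = list_encode (map (\<lambda>q. cell l (kk l) (KK l + q)) [0..<nn l])"
    using encrow_aux[of "nn l" "nn l"] by simp
  finally show ?thesis .
qed

lemma sound:
  assumes xX: "xconf c \<in> X" and D: "diag_ok c l"
  shows "encrow l = list_encode (map e (win ((f ^^ kk l) (xconf c)) (nn l)))"
proof -
  have "map (\<lambda>q. cell l (kk l) (KK l + q)) [0..<nn l] = map e (win ((f ^^ kk l) (xconf c)) (nn l))"
  proof (rule nth_equalityI)
    fix i assume "i < length (map (\<lambda>q. cell l (kk l) (KK l + q)) [0..<nn l])"
    then have i: "i < nn l" by simp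
    have "cell l (kk l) (KK l + i) = e ((f ^^ kk l) (xconf c) (int (KK l + i) - int (KK l)))"
      by (rule diag_sound[OF xX D]) (use i in \<open>auto simp: KK_def WW_def mult.commute\<close>)
    then show "map (\<lambda>q. cell l (kk l) (KK l + q)) [0..<nn l] ! i = map e (win ((f ^^ kk l) (xconf c)) (nn l)) ! i"
      using i by (simp add: win_def)
  qed (simp add: win_def)
  then show ?thesis by (simp add: encrow_eq)
qed

end




context enc_ok
begin

lemma diag_complete:
  assumes zX: "xconf c \<in> X"
  shows "\<exists>l. kk l = k \<and> nn l = n \<and> diag_ok c l"
proof -
  let ?z = "xconf c"
  define K where "K = k * r"
  define W where "W = n + 2 * K"
  define D where "D = map (\<lambda>j. e ((f ^^ (j div W)) ?z (int (j mod W) - int K))) [0..<(k+1)*W]"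
  define l where "l = list_encode [k, n, list_encode D]"
  have kk: "kk l = k" and nn: "nn l = n" by (simp_all add: l_def kk_def nn_def nthc_list_encode del: list_encode.simps)
  have KK: "KK l = K" and WW: "WW l = W" by (simp_all add: KK_def WW_def kk nn K_def W_def)
  have cell: "cell l t q = e ((f ^^ t) ?z (int q - int K))" if "t \<le> k" "q < W" for t q
  proof -
    have lt: "t * W + q < (k+1) * W"
    proof -
      have "t * W + q < t * W + W" using that by simp
      also have "\<dots> \<le> (k+1) * W" using that by (simp add: mult_le_mono1 algebra_simps)
      finally show ?thesis .
    qed
    have dm: "(t * W + q) div W = t" "(t * W + q) mod W = q" using that by auto
    have len: "t*W+q < length D" using lt by (simp add: D_def)
    have "cell l t q = nthc (list_encode D) (t*W+q)"
      unfolding cell_def WW by (simp add: l_def nthc_list_encode del: list_encode.simps)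
    also have "\<dots> = D ! (t*W+q)" using len by (rule nthc_list_encode)
    also have "\<dots> = e ((f ^^ t) ?z (int q - int K))" using lt dm by (simp add: D_def del: upt_Suc)
    finally show ?thesis .
  qed
  have "diag_ok c l"
    unfolding diag_ok_def kk KK WW
  proof (intro conjI allI impI)
    fix q assume "q < W"
    then show "cell l 0 q = xcode c q K" using cell[of 0 q] e_xconf by simp
  next
    fix t q assume t: "t < k" and q: "q < W" and rq: "r \<le> q \<and> q + r < W"
    let ?y = "(f ^^ t) ?z"
    have yX: "?y \<in> X" using funpow_X[OF zX] .
    have cells: "map (\<lambda>i. cell l t (q - r + i)) [0..<2*r+1] = map e (map (\<lambda>i. ?y (int q - int K - int r + int i)) [0..<2*r+1])"
    proof (rule nth_equalityI)
      fix i assume "i < length (map (\<lambda>i. cell l t (q - r + i)) [0..<2*r+1])"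
      then have i: "i < 2*r+1" by simp
      have "q - r + i < W" using i rq by arith
      then have "cell l t (q - r + i) = e (?y (int (q - r + i) - int K))" using cell[of t "q - r + i"] t by simp
      moreover have "int (q - r + i) - int K = int q - int K - int r + int i" using rq by simp
      ultimately show "map (\<lambda>i. cell l t (q - r + i)) [0..<2*r+1] ! i =
        map e (map (\<lambda>i. ?y (int q - int K - int r + int i)) [0..<2*r+1]) ! i"
        using i by (simp del: upt_Suc add: algebra_simps)
    qed simp
    have "phichain tsl (map (\<lambda>i. cell l t (q - r + i)) [0..<2*r+1]) = e (\<phi> (map (\<lambda>i. ?y (int q - int K - int r + int i)) [0..<2*r+1]))"
      unfolding cells by (rule phi_ok) simp
    also have "\<dots> = e (f ?y (int q - int K))" using loc[OF yX] by simp
    also have "\<dots> = cell l (t + 1) q" using cell[of "t+1" q] t q by simp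
    finally show "cell l (t + 1) q = phichain tsl (map (\<lambda>i. cell l t (q - r + i)) [0..<2*r+1])" by simp
  qed
  then show ?thesis using kk nn by blast
qed

lemma xconf_exists:
  fixes M P :: nat and x :: "'a config"
  assumes P: "0 < P" "P \<le> M"
    and right: "\<forall>pos\<ge>int M. x pos = x (int M - int P + (pos - int M) mod int P)"
    and left: "\<forall>pos < - int M. x pos = x (- int M + (pos + int M) mod int P)"
  shows "\<exists>c. xconf c = x"
proof -
  define D where "D = map (\<lambda>j. e (x (int j - int M))) [0..<2*M]"
  define c where "c = list_encode (M # P # D)"
  have c0: "nthc c 0 = M" and c1: "nthc c (Suc 0) = P" by (simp_all add: c_def nthc_list_encode del: list_encode.simps)
  have c2: "nthc c (2 + j) = e (x (int j - int M))" if "j < 2*M" for j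
    using that by (simp add: c_def D_def nthc_list_encode del: list_encode.simps)
  have xr: "xraw c q K = e (x (int q - int K))" for q K
  proof -
    consider (R) "K + M \<le> q" | (L) "\<not> K + M \<le> q" "q + M < K" | (Mid) "\<not> K + M \<le> q" "\<not> q + M < K" by blast
    then show ?thesis
    proof cases
      case R
      define j where "j = 2 * M - P + (q - K - M) mod P"
      have "(q - K - M) mod P < P" using P by simp
      then have j: "j < 2 * M" using P unfolding j_def by linarith
      have "xraw c q K = nthc c (2 + j)" using R by (simp add: xraw_def Let_def c0 c1 j_def)
      also have "\<dots> = e (x (int j - int M))" using c2[OF j] .
      also have "int j - int M = int M - int P + (int q - int K - int M) mod int P"
        using R P by (simp add: j_def of_nat_mod of_nat_diff diff_diff_eq)
      also have "x \<dots> = x (int q - int K)" using right R by (metis (no_types) add.commute diff_diff_eq le_diff_eq of_nat_add of_nat_le_iff)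
      finally show ?thesis .
    next
      case L
      define d where "d = K - q - M - 1"
      define j where "j = (P - 1) - d mod P"
      have "d mod P < P" using P by simp
      then have j: "j < 2 * M" "j < P" using P by (auto simp: j_def)
      have "xraw c q K = nthc c (2 + j)" using L by (simp add: xraw_def Let_def c0 c1 j_def d_def)
      also have "\<dots> = e (x (int j - int M))" using c2[OF j(1)] .
      also have "int j = (int q - int K + int M) mod int P"
      proof -
        have dd: "int d = int P * int (d div P) + int (d mod P)" by (simp flip: of_nat_mult of_nat_add)
        have jj: "int j = int P - 1 - int (d mod P)" using \<open>d mod P < P\<close> by (simp add: j_def of_nat_diff)
        have "int q - int K + int M = - (int d + 1)" using L by (simp add: d_def of_nat_diff)
        also have "\<dots> = int j + (- (int (d div P) + 1)) * int P" using dd jj by (simp add: algebra_simps)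
        finally have "(int q - int K + int M) mod int P = (int j + (- (int (d div P) + 1)) * int P) mod int P" by simp
        also have "\<dots> = int j mod int P" by simp
        also have "\<dots> = int j" using j by simp
        finally show ?thesis by simp
      qed
      also have "x (\<dots> - int M) = x (int q - int K)"
      proof -
        have "int q - int K < - int M" using L by simp
        then show ?thesis using left by (simp add: algebra_simps)
      qed
      finally show ?thesis .
    next
      case Mid
      define j where "j = q + M - K"
      have j: "j < 2 * M" using Mid by (simp add: j_def)
      have "xraw c q K = nthc c (2 + j)" using Mid by (simp add: xraw_def Let_def c0 c1 j_def)
      also have "\<dots> = e (x (int j - int M))" using c2[OF j] .
      also have "int j - int M = int q - int K" using Mid by (simp add: j_def of_nat_diff)
      finally show ?thesis by simp
    qed
  qed
  have "xconf c pos = x pos" for pos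
    unfolding xconf_def xcode_def xr by (simp add: inv_f_f[OF inj])
  then show ?thesis by blast
qed

end




theorem lemma2:
  fixes X :: "('a::finite) config set" and f :: "'a config \<Rightarrow> 'a config" and e :: "'a \<Rightarrow> nat"
  assumes "countable X" and "is_SFT X" and "cellular_automaton X f" and "inj e"
  shows "Sigma0_3 (word_code e ` language (asymptotic_set X f))"
proof -
  obtain F N where FN: "finite F" "X = avoid F" "0 < N" "\<forall>w\<in>F. length w \<le> N"
    using sft_avoid[OF assms(2)] by blast
  obtain r \<phi> where loc: "\<forall>x\<in>X. \<forall>i. f x i = \<phi> (map (\<lambda>t. x (i - int r + int t)) [0..<2*r+1])"
    using ca_local[OF assms(3) FN(2)] by blast
  obtain Fl where Fl: "set Fl = F" using finite_list[OF FN(1)] by blast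
  obtain al :: "'a list" where al: "set al = UNIV" using finite_list[OF finite_UNIV] by blast
  have "finite {ts :: 'a list. set ts \<subseteq> UNIV \<and> length ts = 2*r+1}" by (rule finite_lists_length_eq) simp
  then obtain tsl :: "'a list list" where tsl: "set tsl = {ts. length ts = 2*r+1}"
    using finite_list by fastforce
  have fX: "f x \<in> X" if "x \<in> X" for x using assms(3) that by (auto simp: cellular_automaton_def)
  interpret E: enc_ok e r \<phi> Fl al tsl X f
    by unfold_locales (use assms(4) al tsl FN(2) Fl loc fX in auto)
  have glue: "glue X N" unfolding glue_def
  proof (intro ballI allI impI)
    fix x y assume "x \<in> X" "\<forall>i. \<exists>j. \<forall>t<N. y (i + int t) = x (j + int t)"
    then show "y \<in> X" using glue_avoid[OF FN(4)] FN(2) by blast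
  qed
  have tl_len: "\<forall>ts\<in>set tsl. length ts \<le> 2*r+1" using tsl by simp
  have enc_inj: "list_encode (map e u) = list_encode (map e v) \<longleftrightarrow> u = v" for u v
    using assms(4) by (simp add: list_encode_eq inj_map_eq_map)
  define R where "R a b d w = E.Rsem a b d w" for a b d w
  have rec: "recursive_pred4 R"
    unfolding recursive_pred4_def
  proof (intro exI[of _ "compx 4 E.Rexp"] allI)
    fix a b d w
    have "reval (compx 4 E.Rexp) [a, b, d, w] (ev E.Rexp [a, b, d, w])" by (rule reval_comp) simp
    then show "(R a b d w \<longrightarrow> reval (compx 4 E.Rexp) [a, b, d, w] 1) \<and> (\<not> R a b d w \<longrightarrow> reval (compx 4 E.Rexp) [a, b, d, w] 0)"
      using E.ev_Rexp[OF tl_len] by (cases "E.Rsem a b d w") (simp_all add: R_def)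
  qed
  have equiv: "w \<in> word_code e ` language (asymptotic_set X f) \<longleftrightarrow> (\<exists>c. \<forall>m. \<exists>l. R c m l w)" for w
  proof
    assume "w \<in> word_code e ` language (asymptotic_set X f)"
    then obtain u where u: "u \<in> language (asymptotic_set X f)" "w = list_encode (map e u)"
      by (auto simp: word_code_def)
    then obtain x where x: "x \<in> X" "\<forall>n. \<exists>k\<ge>n. win ((f ^^ k) x) (length u) = u"
      using lang_asym by blast
    obtain M P where MP: "0 < P" "P \<le> M" "\<forall>pos\<ge>M. x pos = x (M - P + (pos - M) mod P)"
      "\<forall>pos < - M. x pos = x (- M + (pos + M) mod P)"
      using ep_form[OF glue x(1) assms(1) FN(3)] by blast
    have "\<exists>c. E.xconf c = x"
      by (rule E.xconf_exists[of "nat P" "nat M"]) (use MP in auto)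
    then obtain c where c: "E.xconf c = x" by blast
    have "\<forall>m. \<exists>l. R c m l w"
    proof
      fix m
      obtain k where k: "k \<ge> m" "win ((f ^^ k) x) (length u) = u" using x(2) by blast
      obtain l where l: "E.kk l = k" "E.nn l = length u" "E.diag_ok c l"
        using E.diag_complete[of c k "length u"] c x(1) by blast
      have "E.encrow l = list_encode (map e (win ((f ^^ k) x) (length u)))"
        using E.sound[of c l] c x(1) l by simp
      then have "E.encrow l = w" using k(2) u(2) by simp
      moreover have "E.validc c m" using E.valid_all[of c] c x(1) by simp
      ultimately show "\<exists>l. R c m l w" using l k(1) by (auto simp: R_def E.Rsem_def)
    qed
    then show "\<exists>c. \<forall>m. \<exists>l. R c m l w" by blast
  next
    assume "\<exists>c. \<forall>m. \<exists>l. R c m l w"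
    then obtain c where c: "\<And>m. \<exists>l. R c m l w" by blast
    let ?x = "E.xconf c"
    have xX: "?x \<in> X" using c E.valid_all by (auto simp: R_def E.Rsem_def)
    have wl: "\<exists>l. E.kk l \<ge> m \<and> w = list_encode (map e (win ((f ^^ E.kk l) ?x) (E.nn l)))" for m
    proof -
      obtain l where "R c m l w" using c by blast
      then show ?thesis using E.sound[OF xX] by (auto simp: R_def E.Rsem_def)
    qed
    obtain l0 where l0: "w = list_encode (map e (win ((f ^^ E.kk l0) ?x) (E.nn l0)))" using wl[of 0] by blast
    define u where "u = win ((f ^^ E.kk l0) ?x) (E.nn l0)"
    have "\<forall>n. \<exists>k\<ge>n. win ((f ^^ k) ?x) (length u) = u"
    proof
      fix n
      obtain l where l: "E.kk l \<ge> n" "w = list_encode (map e (win ((f ^^ E.kk l) ?x) (E.nn l)))" using wl by blast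
      then have eq: "win ((f ^^ E.kk l) ?x) (E.nn l) = u" using l0 enc_inj by (simp add: u_def)
      then have "length u = E.nn l" by (metis length_map length_upt win_def diff_zero)
      then show "\<exists>k\<ge>n. win ((f ^^ k) ?x) (length u) = u" using eq l(1) by auto
    qed
    then have "u \<in> language (asymptotic_set X f)" using lang_asym xX by blast
    moreover have "w = word_code e u" using l0 by (simp add: word_code_def u_def)
    ultimately show "w \<in> word_code e ` language (asymptotic_set X f)" by blast
  qed
  show ?thesis unfolding Sigma0_3_def using rec equiv by blast
qed


end
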